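(* Let $\lambda\in(0,r^\alpha)$ and consider the $\lambda$-NRW on the augmented tree with horizontal conductances $c(\mathbf x,\mathbf y)=r^{\alpha|\mathbf x|}\lambda^{-|\mathbf x|}$. Then for any two closed subsets $\Phi,\Psi\subset K$, the limit $\lim_{n\to\infty}R_n^{(\lambda)}(\Phi,\Psi)$ exists and is independent of the choice of the $\kappa$-sequence.
   Context: Let $\{S_i\}_{i=1}^N$ ($N\ge2$) be contractive similitudes of $\mathbb R^d$ with ratios $r_i\in(0,1)$ satisfying the open set condition; $K$ the self-similar set, $\alpha$ its Hausdorff dimension ($\sum_ir_i^\alpha=1$), $r=\min_ir_i$. $\Sigma^*$ finite words over $\{1,\dots,N\}$ with empty word $\vartheta$, $S_{\mathbf x}=S_{i_1}\circ\cdots\circ S_{i_k}$, $r_{\mathbf x}=r_{i_1}\cdots r_{i_k}$. $\mathcal J_0=\{\vartheta\}$, $\mathcal J_n=\{i_1\cdots i_k: r_{i_1\cdots i_k}\le r^n<r_{i_1\cdots i_{k-1}}\}$, $X=\bigcup_n\mathcal J_n$, $X_n=\bigcup_{k=0}^n\mathcal J_k$, $|\mathbf x|=n$ on $\mathcal J_n$, parent $\mathbf x^-$ = prefix of $\mathbf x$ in $\mathcal J_{n-1}$. Edges: vertical $\{\mathbf x,\mathbf x^-\}$, horizontal $\{\mathbf x,\mathbf y\}$ for $\mathbf x\ne\mathbf y\in\mathcal J_n$ with $\inf_{\xi,\eta\in K}|S_{\mathbf x}(\xi)-S_{\mathbf y}(\eta)|\le\gamma r^n$ ($\gamma>0$ fixed).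 The $\lambda$-NRW has symmetric conductances $c(\mathbf x,\mathbf x^-)=r_{\mathbf x}^\alpha\lambda^{-|\mathbf x|}$, $c(\mathbf x,\mathbf y)=r^{\alpha|\mathbf x|}\lambda^{-|\mathbf x|}$ on horizontal edges, zero off edges; $X_n$ carries the restricted conductances and energy $\mathcal E_{X_n}[f]=\frac12\sum_{\mathbf x,\mathbf y\in X_n}c(\mathbf x,\mathbf y)(f(\mathbf x)-f(\mathbf y))^2$. Effective resistance: for disjoint nonempty $E,F\subset X_n$, $R_{X_n}(E,F)=(\min\{\mathcal E_{X_n}[f]: f=1$ on $E$, $f=0$ on $F\})^{-1}$, and $R_{X_n}(E,F)=0$ if $E\cap F\ne\emptyset$. A geodesic ray is $(\mathbf x_n)_{n\ge0}$, $\mathbf x_n\in\mathcal J_n$, each a prefix of the next; it converges to $\xi\in K$ if $\xi\in S_{\mathbf x_n}(K)$ for all $n$. A $\kappa$-sequence is a family of maps $\kappa_n:K\to\mathcal J_n$ such that for each $\xi\in K$, $(\kappa_n(\xi))_n$ is a geodesic ray converging to $\xi$. The level-$n$ resistance is $R^{(\lambda)}_n(\Phi,\Psi)=R_{X_n}(\kappa_n(\Phi),\kappa_n(\Psi))$. *)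

theory Defs
  imports "HOL-Analysis.Analysis" "HOL-Library.Sublist"
begin

text \<open>Words over the alphabet {0..<N} (the paper's {1..N}) are lists of naturals.
  The IFS is given by maps S i and ratios rr i for i < N.\<close>

definition similitude :: "real \<Rightarrow> ('a::euclidean_space \<Rightarrow> 'a) \<Rightarrow> bool" where
  "similitude c f \<longleftrightarrow> (\<forall>x y. dist (f x) (f y) = c * dist x y)"

definition open_set_condition :: "nat \<Rightarrow> (nat \<Rightarrow> 'a::euclidean_space \<Rightarrow> 'a) \<Rightarrow> bool" where
  "open_set_condition N S \<longleftrightarrow>
     (\<exists>U. open U \<and> U \<noteq> {} \<and> (\<forall>i<N. S i ` U \<subseteq> U) \<and>
          (\<forall>i<N. \<forall>j<N. i \<noteq> j \<longrightarrow> S i ` U \<inter> S j ` U = {}))"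

definition word_ratio :: "(nat \<Rightarrow> real) \<Rightarrow> nat list \<Rightarrow> real" where
  "word_ratio rr w = prod_list (map rr w)"

definition word_map :: "(nat \<Rightarrow> 'a \<Rightarrow> 'a) \<Rightarrow> nat list \<Rightarrow> 'a \<Rightarrow> 'a" where
  "word_map S w = foldr (\<lambda>i g. S i \<circ> g) w id"

definition rmin :: "nat \<Rightarrow> (nat \<Rightarrow> real) \<Rightarrow> real" where
  "rmin N rr = Min (rr ` {..<N})"

definition Jn :: "nat \<Rightarrow> (nat \<Rightarrow> real) \<Rightarrow> nat \<Rightarrow> nat list set" where
  "Jn N rr n = (if n = 0 then {[]} else
     {w. set w \<subseteq> {..<N} \<and> w \<noteq> [] \<and> word_ratio rr w \<le> rmin N rr ^ n \<and>
         rmin N rr ^ n < word_ratio rr (butlast w)})"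

definition Xn :: "nat \<Rightarrow> (nat \<Rightarrow> real) \<Rightarrow> nat \<Rightarrow> nat list set" where
  "Xn N rr n = (\<Union>k\<le>n. Jn N rr k)"

definition in_tree :: "nat \<Rightarrow> (nat \<Rightarrow> real) \<Rightarrow> nat list \<Rightarrow> bool" where
  "in_tree N rr w \<longleftrightarrow> (\<exists>n. w \<in> Jn N rr n)"

text \<open>The level |w| (the J_n are pairwise disjoint, so this is the unique n with w in J_n).\<close>
definition level :: "nat \<Rightarrow> (nat \<Rightarrow> real) \<Rightarrow> nat list \<Rightarrow> nat" where
  "level N rr w = (LEAST n. w \<in> Jn N rr n)"

definition vert_edge :: "nat \<Rightarrow> (nat \<Rightarrow> real) \<Rightarrow> nat list \<Rightarrow> nat list \<Rightarrow> bool" where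
  "vert_edge N rr x y \<longleftrightarrow> in_tree N rr x \<and> 1 \<le> level N rr x \<and>
     y \<in> Jn N rr (level N rr x - 1) \<and> prefix y x"

definition horiz_edge :: "nat \<Rightarrow> (nat \<Rightarrow> real) \<Rightarrow> (nat \<Rightarrow> 'a::euclidean_space \<Rightarrow> 'a) \<Rightarrow> 'a set
     \<Rightarrow> real \<Rightarrow> nat list \<Rightarrow> nat list \<Rightarrow> bool" where
  "horiz_edge N rr S K \<gamma> x y \<longleftrightarrow> x \<noteq> y \<and> in_tree N rr x \<and> y \<in> Jn N rr (level N rr x) \<and>
     Inf {dist (word_map S x \<xi>) (word_map S y \<eta>) | \<xi> \<eta>. \<xi> \<in> K \<and> \<eta> \<in> K}
       \<le> \<gamma> * rmin N rr ^ level N rr x"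

definition cond :: "nat \<Rightarrow> (nat \<Rightarrow> real) \<Rightarrow> (nat \<Rightarrow> 'a::euclidean_space \<Rightarrow> 'a) \<Rightarrow> 'a set
     \<Rightarrow> real \<Rightarrow> real \<Rightarrow> real \<Rightarrow> nat list \<Rightarrow> nat list \<Rightarrow> real" where
  "cond N rr S K \<alpha> \<gamma> lam x y =
     (if vert_edge N rr x y then word_ratio rr x powr \<alpha> / lam ^ level N rr x
      else if vert_edge N rr y x then word_ratio rr y powr \<alpha> / lam ^ level N rr y
      else if horiz_edge N rr S K \<gamma> x y then
        (rmin N rr powr \<alpha>) ^ level N rr x / lam ^ level N rr x
      else 0)"

definition energy :: "nat \<Rightarrow> (nat \<Rightarrow> real) \<Rightarrow> (nat \<Rightarrow> 'a::euclidean_space \<Rightarrow> 'a) \<Rightarrow> 'a set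
     \<Rightarrow> real \<Rightarrow> real \<Rightarrow> real \<Rightarrow> nat \<Rightarrow> (nat list \<Rightarrow> real) \<Rightarrow> real" where
  "energy N rr S K \<alpha> \<gamma> lam n f =
     1/2 * (\<Sum>x\<in>Xn N rr n. \<Sum>y\<in>Xn N rr n. cond N rr S K \<alpha> \<gamma> lam x y * (f x - f y)^2)"

definition eff_res :: "nat \<Rightarrow> (nat \<Rightarrow> real) \<Rightarrow> (nat \<Rightarrow> 'a::euclidean_space \<Rightarrow> 'a) \<Rightarrow> 'a set
     \<Rightarrow> real \<Rightarrow> real \<Rightarrow> real \<Rightarrow> nat \<Rightarrow> nat list set \<Rightarrow> nat list set \<Rightarrow> real" where
  "eff_res N rr S K \<alpha> \<gamma> lam n E F =
     (if E \<inter> F \<noteq> {} then 0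
      else inverse (Inf {energy N rr S K \<alpha> \<gamma> lam n f | f.
                          (\<forall>x\<in>E. f x = 1) \<and> (\<forall>x\<in>F. f x = 0)}))"

text \<open>kappa-sequences: for each xi in K, (kappa n xi)_n is a geodesic ray converging to xi.\<close>
definition kappa_seq :: "nat \<Rightarrow> (nat \<Rightarrow> real) \<Rightarrow> (nat \<Rightarrow> 'a \<Rightarrow> 'a) \<Rightarrow> 'a set
     \<Rightarrow> (nat \<Rightarrow> 'a \<Rightarrow> nat list) \<Rightarrow> bool" where
  "kappa_seq N rr S K \<kappa> \<longleftrightarrow>
     (\<forall>\<xi>\<in>K. \<forall>n. \<kappa> n \<xi> \<in> Jn N rr n \<and> prefix (\<kappa> n \<xi>) (\<kappa> (Suc n) \<xi>) \<and>
               \<xi> \<in> word_map S (\<kappa> n \<xi>) ` K)"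

definition level_res :: "nat \<Rightarrow> (nat \<Rightarrow> real) \<Rightarrow> (nat \<Rightarrow> 'a::euclidean_space \<Rightarrow> 'a) \<Rightarrow> 'a set
     \<Rightarrow> real \<Rightarrow> real \<Rightarrow> real \<Rightarrow> (nat \<Rightarrow> 'a \<Rightarrow> nat list) \<Rightarrow> nat \<Rightarrow> 'a set \<Rightarrow> 'a set \<Rightarrow> real" where
  "level_res N rr S K \<alpha> \<gamma> lam \<kappa> n \<Phi> \<Psi> =
     eff_res N rr S K \<alpha> \<gamma> lam n (\<kappa> n ` \<Phi>) (\<kappa> n ` \<Psi>)"

end

theory Submission
  imports Defs
begin


definition En :: "'b set \<Rightarrow> ('b \<Rightarrow> 'b \<Rightarrow> real) \<Rightarrow> ('b \<Rightarrow> real) \<Rightarrow> real" where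
  "En V c f = 1/2 * (\<Sum>x\<in>V. \<Sum>y\<in>V. c x y * (f x - f y)^2)"
definition Bf :: "'b set \<Rightarrow> ('b \<Rightarrow> 'b \<Rightarrow> real) \<Rightarrow> ('b \<Rightarrow> real) \<Rightarrow> ('b \<Rightarrow> real) \<Rightarrow> real" where
  "Bf V c f h = 1/2 * (\<Sum>x\<in>V. \<Sum>y\<in>V. c x y * (f x - f y) * (h x - h y))"
definition cur :: "'b set \<Rightarrow> ('b \<Rightarrow> 'b \<Rightarrow> real) \<Rightarrow> ('b \<Rightarrow> real) \<Rightarrow> 'b \<Rightarrow> real" where
  "cur V c f x = (\<Sum>y\<in>V. c x y * (f x - f y))"
definition adm :: "'b set \<Rightarrow> 'b set \<Rightarrow> ('b \<Rightarrow> real) \<Rightarrow> bool" where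
  "adm A B f \<longleftrightarrow> (\<forall>x\<in>A. f x = 1) \<and> (\<forall>x\<in>B. f x = 0)"
definition cap :: "'b set \<Rightarrow> ('b \<Rightarrow> 'b \<Rightarrow> real) \<Rightarrow> 'b set \<Rightarrow> 'b set \<Rightarrow> real" where
  "cap V c A B = Inf {En V c f | f. adm A B f}"

lemma quad_zero:
  fixes a b :: real
  assumes "0 \<le> b" and "\<And>t. 0 \<le> a * t + b * t^2"
  shows "a = 0"
proof (rule ccontr)
  assume ne: "a \<noteq> 0"
  define t where "t = - a / (b + 1)"
  have e: "(b + 1) * t = - a" using assms(1) unfolding t_def by simp
  have "(b+1)^2 * (a * t + b * t^2) = a * (b+1) * ((b+1) * t) + b * ((b+1) * t)^2"
    by (simp add: power2_eq_square algebra_simps)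
  also have "\<dots> = - (a^2)" unfolding e by (simp add: power2_eq_square algebra_simps)
  finally have "(b+1)^2 * (a * t + b * t^2) < 0" using ne by simp
  moreover have "0 \<le> (b+1)^2 * (a * t + b * t^2)" using assms(2)[of t] by simp
  ultimately show False by simp
qed

lemma continuous_on_coord [continuous_intros]: "continuous_on S (\<lambda>f::'b \<Rightarrow> real. f x)"
proof -
  have "continuous_on UNIV (\<lambda>f::'b \<Rightarrow> real. f x)" by (rule continuous_on_product_coordinates)
  then show ?thesis by (rule continuous_on_subset) simp
qed

locale net =
  fixes V :: "'b set" and c :: "'b \<Rightarrow> 'b \<Rightarrow> real"
  assumes fin: "finite V" and sym: "\<And>x y. c x y = c y x" and nn: "\<And>x y. 0 \<le> c x y"
begin

lemma En_nonneg: "0 \<le> En V c f"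
  unfolding En_def by (intro mult_nonneg_nonneg sum_nonneg) (auto intro: mult_nonneg_nonneg nn)

lemma En_Bf: "En V c f = Bf V c f f"
  unfolding En_def Bf_def by (simp add: power2_eq_square mult.assoc)

lemma Bf_comm: "Bf V c f h = Bf V c h f"
  unfolding Bf_def by (simp add: algebra_simps)

lemma Bf_parts: "Bf V c f h = (\<Sum>x\<in>V. h x * cur V c f x)"
proof -
  have "(\<Sum>x\<in>V. \<Sum>y\<in>V. c x y * (f x - f y) * (h x - h y)) =
     (\<Sum>x\<in>V. \<Sum>y\<in>V. c x y * (f x - f y) * h x) - (\<Sum>x\<in>V. \<Sum>y\<in>V. c x y * (f x - f y) * h y)"
    by (simp add: sum_subtractf[symmetric] algebra_simps)
  also have "(\<Sum>x\<in>V. \<Sum>y\<in>V. c x y * (f x - f y) * h y) = (\<Sum>y\<in>V. \<Sum>x\<in>V. c x y * (f x - f y) * h y)"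
    by (rule sum.swap)
  also have "\<dots> = (\<Sum>x\<in>V. \<Sum>y\<in>V. - (c x y * (f x - f y) * h x))"
    by (intro sum.cong refl) (simp add: sym algebra_simps)
  also have "\<dots> = - (\<Sum>x\<in>V. \<Sum>y\<in>V. c x y * (f x - f y) * h x)"
    by (simp add: sum_negf)
  finally have "(\<Sum>x\<in>V. \<Sum>y\<in>V. c x y * (f x - f y) * (h x - h y)) =
      2 * (\<Sum>x\<in>V. \<Sum>y\<in>V. c x y * (f x - f y) * h x)" by simp
  moreover have "(\<Sum>x\<in>V. \<Sum>y\<in>V. c x y * (f x - f y) * h x) = (\<Sum>x\<in>V. h x * cur V c f x)"
    unfolding cur_def by (simp add: sum_distrib_left algebra_simps)
  ultimately show ?thesis unfolding Bf_def by simp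
qed

lemma En_shift: "En V c (\<lambda>x. f x + t * h x) = En V c f + 2 * t * Bf V c f h + t^2 * En V c h"
proof -
  have pw: "\<And>x y. c x y * ((f x + t * h x) - (f y + t * h y))^2 =
      c x y * (f x - f y)^2 + 2 * t * (c x y * (f x - f y) * (h x - h y)) + t^2 * (c x y * (h x - h y)^2)"
    by (simp add: power2_eq_square algebra_simps)
  have "(\<Sum>x\<in>V. \<Sum>y\<in>V. c x y * ((f x + t * h x) - (f y + t * h y))^2) =
     (\<Sum>x\<in>V. \<Sum>y\<in>V. c x y * (f x - f y)^2 + 2 * t * (c x y * (f x - f y) * (h x - h y)) + t^2 * (c x y * (h x - h y)^2))"
    by (simp only: pw)
  also have "\<dots> = (\<Sum>x\<in>V. \<Sum>y\<in>V. c x y * (f x - f y)^2) + 2 * t * (\<Sum>x\<in>V. \<Sum>y\<in>V. c x y * (f x - f y) * (h x - h y))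
      + t^2 * (\<Sum>x\<in>V. \<Sum>y\<in>V. c x y * (h x - h y)^2)"
    by (simp add: sum.distrib sum_distrib_left)
  finally show ?thesis unfolding En_def Bf_def by (simp add: algebra_simps)
qed

lemma CS: "(Bf V c f h)^2 \<le> En V c f * En V c h"
proof -
  have q: "0 \<le> En V c f + 2 * t * Bf V c f h + t^2 * En V c h" for t
    using En_shift[of f t h] En_nonneg[of "\<lambda>x. f x + t * h x"] by simp
  show ?thesis
  proof (cases "En V c h = 0")
    case True
    have "Bf V c f h = 0"
    proof (rule ccontr)
      assume ne: "Bf V c f h \<noteq> 0"
      have "0 \<le> En V c f + 2 * (- (En V c f + 1) / (2 * Bf V c f h)) * Bf V c f h"
        using q[of "- (En V c f + 1) / (2 * Bf V c f h)"] True by simp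
      also have "\<dots> = -1" using ne by (simp add: field_simps)
      finally show False by simp
    qed
    then show ?thesis using True by simp
  next
    case False
    then have pos: "0 < En V c h" using En_nonneg[of h] by simp
    have "0 \<le> En V c f + 2 * (- Bf V c f h / En V c h) * Bf V c f h + (- Bf V c f h / En V c h)^2 * En V c h"
      by (rule q)
    also have "\<dots> = En V c f - (Bf V c f h)^2 / En V c h"
      using pos by (simp add: field_simps power2_eq_square)
    finally show ?thesis using pos by (simp add: field_simps)
  qed
qed

lemma Bf_le: "Bf V c f h \<le> sqrt (En V c f * En V c h)"
  using CS[of f h] real_le_rsqrt by (smt (verit) real_sqrt_abs real_sqrt_le_mono)

lemma exists_min:
  assumes AB: "A \<inter> B = {}"
  shows "\<exists>f. adm A B f \<and> (\<forall>x. 0 \<le> f x \<and> f x \<le> 1) \<and> (\<forall>g. adm A B g \<longrightarrow> En V c f \<le> En V c g)"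
proof -
  define S where "S x = (if x \<in> A then {1} else if x \<in> B then {0} else {0..1::real})" for x
  define KK where "KK = PiE UNIV S"
  have cS: "compactin euclidean (S x)" for x
    unfolding S_def compactin_euclidean_iff by auto
  have "compactin (product_topology (\<lambda>_. euclidean) UNIV) KK"
    unfolding KK_def compactin_PiE using cS by auto
  then have cK: "compact KK" by (simp add: euclidean_product_topology compactin_euclidean_iff)
  have mem: "f \<in> KK \<longleftrightarrow> (\<forall>x. f x \<in> S x)" for f unfolding KK_def by (simp add: PiE_UNIV_domain Pi_iff)
  have ne: "KK \<noteq> {}"
  proof -
    have "(\<lambda>x. if x \<in> A then 1 else 0::real) \<in> KK" unfolding mem S_def using AB by auto
    then show ?thesis by auto
  qed
  have cont: "continuous_on KK (En V c)"
    unfolding En_def by (intro continuous_intros)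
  obtain f where fK: "f \<in> KK" and fmin: "\<forall>y\<in>KK. En V c f \<le> En V c y"
    using continuous_attains_inf[OF cK ne cont] by blast
  have fS: "f x \<in> S x" for x using fK mem by blast
  have fadm: "adm A B f" unfolding adm_def
  proof (intro conjI ballI)
    fix x assume "x \<in> A" then show "f x = 1" using fS[of x] by (simp add: S_def)
  next
    fix x assume "x \<in> B" then show "f x = 0" using fS[of x] AB by (auto simp: S_def split: if_splits)
  qed
  have f01: "0 \<le> f x \<and> f x \<le> 1" for x using fS[of x] by (auto simp: S_def split: if_splits)
  have "En V c f \<le> En V c g" if g: "adm A B g" for g
  proof -
    define h where "h x = max 0 (min 1 (g x))" for x
    have "h \<in> KK" unfolding mem S_def h_def using g AB by (auto simp: adm_def)
    then have "En V c f \<le> En V c h" using fmin by blast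
    also have "En V c h \<le> En V c g"
      unfolding En_def
    proof (intro mult_left_mono sum_mono mult_left_mono)
      fix x y
      have "\<bar>h x - h y\<bar> \<le> \<bar>g x - g y\<bar>" unfolding h_def by (simp add: max_def min_def abs_if)
      then show "(h x - h y)^2 \<le> (g x - g y)^2" by (simp add: abs_le_square_iff)
    qed (auto simp: nn)
    finally show ?thesis .
  qed
  then show ?thesis using fadm f01 by blast
qed

lemma harmonic:
  assumes fadm: "adm A B f" and fmin: "\<forall>g. adm A B g \<longrightarrow> En V c f \<le> En V c g"
    and z: "z \<in> V" "z \<notin> A" "z \<notin> B"
  shows "cur V c f z = 0"
proof -
  define h where "h x = (if x = z then 1 else 0::real)" for x
  have Bz: "Bf V c f h = cur V c f z"
    unfolding Bf_parts h_def using z(1) fin by (simp add: if_distrib[of "\<lambda>a. a * _"] sum.delta cong: if_cong)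
  have "0 \<le> (2 * cur V c f z) * t + En V c h * t^2" for t
  proof -
    have "adm A B (\<lambda>x. f x + t * h x)" using fadm z unfolding adm_def h_def by auto
    then have "En V c f \<le> En V c (\<lambda>x. f x + t * h x)" using fmin by blast
    then show ?thesis unfolding En_shift Bz by (simp add: algebra_simps)
  qed
  then have "2 * cur V c f z = 0" by (intro quad_zero[OF En_nonneg])
  then show ?thesis by simp
qed

lemma cap_min:
  assumes fadm: "adm A B f" and fmin: "\<forall>g. adm A B g \<longrightarrow> En V c f \<le> En V c g"
  shows "cap V c A B = En V c f"
  unfolding cap_def by (rule cInf_eq_minimum) (use fadm fmin in auto)

lemma key:
  assumes AV: "A \<subseteq> V" and BV: "B \<subseteq> V" and AB: "A \<inter> B = {}"
    and Cpos: "0 < cap V c A B" and d: "0 \<le> d"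
    and gA: "\<forall>x\<in>A. \<bar>g x - 1\<bar> \<le> d" and gB: "\<forall>x\<in>B. \<bar>g x\<bar> \<le> d"
  shows "cap V c A B - 2 * d * cap V c A B \<le> sqrt (cap V c A B * En V c g)"
proof -
  obtain f where fadm: "adm A B f" and f01: "\<forall>x. 0 \<le> f x \<and> f x \<le> 1"
    and fmin: "\<forall>g. adm A B g \<longrightarrow> En V c f \<le> En V c g"
    using exists_min[OF AB] by blast
  define C where "C = cap V c A B"
  have CE: "C = En V c f" unfolding C_def by (rule cap_min[OF fadm fmin])
  define i where "i = cur V c f"
  have iA: "0 \<le> i x" if "x \<in> A" for x
  proof -
    have "0 \<le> c x y * (f x - f y)" for y using fadm that f01[rule_format, of y] nn[of x y] by (simp add: adm_def)
    then show ?thesis unfolding i_def cur_def by (simp add: sum_nonneg)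
  qed
  have iB: "i x \<le> 0" if "x \<in> B" for x
  proof -
    have "c x y * (f x - f y) \<le> 0" for y using fadm that f01[rule_format, of y] nn[of x y]
      by (simp add: adm_def mult_nonneg_nonpos)
    then show ?thesis unfolding i_def cur_def by (simp add: sum_nonpos)
  qed
  have i0: "i x = 0" if "x \<in> V - A - B" for x
    unfolding i_def using harmonic[OF fadm fmin] that by blast
  have split: "(\<Sum>x\<in>V. h x * i x) = (\<Sum>x\<in>A. h x * i x) + (\<Sum>x\<in>B. h x * i x)" for h
  proof -
    have finA: "finite A" "finite B" using AV BV fin finite_subset by auto
    have "(\<Sum>x\<in>V. h x * i x) = (\<Sum>x\<in>V - (A \<union> B). h x * i x) + (\<Sum>x\<in>A \<union> B. h x * i x)"
      using AV BV fin by (intro sum.subset_diff) auto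
    then have "(\<Sum>x\<in>V. h x * i x) = (\<Sum>x\<in>A \<union> B. h x * i x) + (\<Sum>x\<in>V - A - B. h x * i x)"
      by (simp add: Un_commute[of "\<Sum>x\<in>A \<union> B. _"] Diff_eq Int_assoc add.commute)
    also have "(\<Sum>x\<in>V - A - B. h x * i x) = 0" using i0 by simp
    also have "(\<Sum>x\<in>A \<union> B. h x * i x) = (\<Sum>x\<in>A. h x * i x) + (\<Sum>x\<in>B. h x * i x)"
      using finA AB by (simp add: sum.union_disjoint)
    finally show ?thesis by simp
  qed
  have sA: "(\<Sum>x\<in>A. i x) = C"
  proof -
    have "C = Bf V c f f" using CE En_Bf by simp
    also have "\<dots> = (\<Sum>x\<in>A. f x * i x) + (\<Sum>x\<in>B. f x * i x)" unfolding Bf_parts i_def[symmetric] split ..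
    also have "\<dots> = (\<Sum>x\<in>A. i x)" using fadm by (simp add: adm_def)
    finally show ?thesis by simp
  qed
  have sB: "(\<Sum>x\<in>B. i x) = - C"
  proof -
    have "Bf V c f (\<lambda>_. 1) = 0" unfolding Bf_def by simp
    then have "(\<Sum>x\<in>A. i x) + (\<Sum>x\<in>B. i x) = 0" unfolding Bf_parts i_def[symmetric] split by simp
    then show ?thesis using sA by simp
  qed
  have low: "C - 2 * d * C \<le> Bf V c f g"
  proof -
    have e: "Bf V c f g = C + (\<Sum>x\<in>A. (g x - 1) * i x) + (\<Sum>x\<in>B. g x * i x)"
    proof -
      have "Bf V c f g = (\<Sum>x\<in>A. g x * i x) + (\<Sum>x\<in>B. g x * i x)" unfolding Bf_parts i_def[symmetric] split ..
      also have "(\<Sum>x\<in>A. g x * i x) = (\<Sum>x\<in>A. i x) + (\<Sum>x\<in>A. (g x - 1) * i x)"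
        by (simp add: left_diff_distrib sum_subtractf)
      finally show ?thesis using sA by simp
    qed
    have a: "- (d * C) \<le> (\<Sum>x\<in>A. (g x - 1) * i x)"
    proof -
      have "(\<Sum>x\<in>A. - (d * i x)) \<le> (\<Sum>x\<in>A. (g x - 1) * i x)"
      proof (rule sum_mono)
        fix x assume x: "x \<in> A"
        have "\<bar>(g x - 1) * i x\<bar> \<le> d * i x" using gA x iA[OF x]
          by (simp add: abs_mult mult_right_mono)
        then show "- (d * i x) \<le> (g x - 1) * i x" by linarith
      qed
      then show ?thesis using sA by (simp add: sum_negf sum_distrib_left[symmetric])
    qed
    have b: "- (d * C) \<le> (\<Sum>x\<in>B. g x * i x)"
    proof -
      have "(\<Sum>x\<in>B. d * i x) \<le> (\<Sum>x\<in>B. g x * i x)"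
      proof (rule sum_mono)
        fix x assume x: "x \<in> B"
        have "\<bar>g x\<bar> * \<bar>i x\<bar> \<le> d * \<bar>i x\<bar>" using gB x by (simp add: mult_right_mono)
        then have "\<bar>g x * i x\<bar> \<le> d * (- i x)" using iB[OF x] by (simp add: abs_mult)
        then show "d * i x \<le> g x * i x" by linarith
      qed
      then show ?thesis using sB by (simp add: sum_distrib_left[symmetric])
    qed
    show ?thesis using e a b by linarith
  qed
  also have "Bf V c f g \<le> sqrt (En V c f * En V c g)" by (rule Bf_le)
  finally show ?thesis using CE C_def by simp
qed

end



lemma powr_pow_base: "0 \<le> (x::real) \<Longrightarrow> (x ^ n) powr a = (x powr a) ^ n"
  by (induction n) (simp_all add: powr_mult)

lemma wr_Nil [simp]: "word_ratio rr [] = 1" by (simp add: word_ratio_def)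
lemma wr_Cons [simp]: "word_ratio rr (i # w) = rr i * word_ratio rr w" by (simp add: word_ratio_def)
lemma wr_append: "word_ratio rr (u @ w) = word_ratio rr u * word_ratio rr w" by (simp add: word_ratio_def)

lemma wm_Cons [simp]: "word_map S (i # w) = S i \<circ> word_map S w" by (simp add: word_map_def)
lemma wm_Nil [simp]: "word_map S [] = id" by (simp add: word_map_def)

locale setting =
  fixes N :: nat and rr :: "nat \<Rightarrow> real" and S :: "nat \<Rightarrow> 'a::euclidean_space \<Rightarrow> 'a"
    and K :: "'a set" and \<alpha> \<gamma> lam :: real
  assumes N2: "2 \<le> N"
    and rrA: "\<forall>i<N. 0 < rr i \<and> rr i < 1 \<and> similitude (rr i) (S i)"
    and sumA: "(\<Sum>i<N. rr i powr \<alpha>) = 1"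
    and gam: "0 < \<gamma>"
    and lam0: "0 < lam" and lam1: "lam < rmin N rr powr \<alpha>"
begin

abbreviation "r \<equiv> rmin N rr"
abbreviation "q \<equiv> rmin N rr powr \<alpha>"
abbreviation "J \<equiv> Jn N rr"
abbreviation "X \<equiv> Xn N rr"
abbreviation "wr \<equiv> word_ratio rr"
definition csym :: "nat list \<Rightarrow> nat list \<Rightarrow> real" where
  "csym x y = (cond N rr S K \<alpha> \<gamma> lam x y + cond N rr S K \<alpha> \<gamma> lam y x) / 2"

lemma r_props: "0 < r" "r < 1" "\<And>i. i < N \<Longrightarrow> r \<le> rr i"
proof -
  have ne: "rr ` {..<N} \<noteq> {}" using N2 by (auto simp: lessThan_empty_iff)
  have "r \<in> rr ` {..<N}" unfolding rmin_def by (rule Min_in) (use ne in auto)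
  then obtain i where "i < N" "r = rr i" by auto
  then show "0 < r" "r < 1" using rrA by auto
  show "\<And>i. i < N \<Longrightarrow> r \<le> rr i" unfolding rmin_def by (rule Min_le) auto
qed

lemma alpha_pos: "0 < \<alpha>"
proof (rule ccontr)
  assume "\<not> 0 < \<alpha>"
  then have a: "\<alpha> \<le> 0" by simp
  have "1 \<le> rr i powr \<alpha>" if "i < N" for i
  proof -
    have "0 < rr i" "rr i < 1" using rrA that by auto
    then have "ln (rr i) < 0" by (rule ln_less_zero)
    then have "0 \<le> \<alpha> * ln (rr i)" using a by (simp add: mult_nonpos_nonpos)
    then show ?thesis using \<open>0 < rr i\<close> by (simp add: powr_def)
  qed
  then have "(\<Sum>i<N. (1::real)) \<le> (\<Sum>i<N. rr i powr \<alpha>)" by (intro sum_mono) auto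
  then show False using sumA N2 by simp
qed

lemma q_pos: "0 < q" using r_props by simp

lemma wr_pos: "set w \<subseteq> {..<N} \<Longrightarrow> 0 < wr w"
  by (induction w) (use rrA in auto)

lemma wr_le1: "set w \<subseteq> {..<N} \<Longrightarrow> wr w \<le> 1"
proof (induction w)
  case (Cons i w)
  then have "0 < rr i" "rr i < 1" "wr w \<le> 1" "0 < wr w" using rrA wr_pos[of w] by auto
  then show ?case by (simp add: mult_le_one)
qed simp

lemma J0: "J 0 = {[]}" by (simp add: Jn_def)

lemma J_set: "w \<in> J n \<Longrightarrow> set w \<subseteq> {..<N}"
  by (cases "n = 0") (auto simp: Jn_def)

lemma J_upper: "w \<in> J n \<Longrightarrow> wr w \<le> r ^ n"
  by (cases "n = 0") (auto simp: Jn_def)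

lemma J_lower: "w \<in> J n \<Longrightarrow> r ^ (Suc n) < wr w"
proof (cases "n = 0")
  case True
  assume "w \<in> J n" then show ?thesis using True r_props by (simp add: Jn_def)
next
  case False
  assume w: "w \<in> J n"
  then have ne: "w \<noteq> []" and st: "set w \<subseteq> {..<N}" and lt: "r ^ n < wr (butlast w)"
    using False by (auto simp: Jn_def)
  have dec: "w = butlast w @ [last w]" using ne by simp
  have "wr w = wr (butlast w) * rr (last w)" by (subst dec, subst wr_append) simp
  moreover have "r \<le> rr (last w)" using st ne r_props(3) by (auto simp: last_in_set subset_eq)
  moreover have "0 < wr (butlast w)" using st by (intro wr_pos) (meson in_set_butlastD subset_eq)
  ultimately have "wr (butlast w) * r \<le> wr w" by (simp add: mult_left_mono)
  moreover have "r ^ n * r < wr (butlast w) * r" using lt r_props by simp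
  ultimately show ?thesis by (simp add: mult.commute)
qed

lemma J_disj: "w \<in> J n \<Longrightarrow> w \<in> J k \<Longrightarrow> n = k"
proof -
  have *: "k \<le> n" if "w \<in> J n" "w \<in> J k" for n k
  proof -
    have "r ^ Suc n < r ^ k" using J_lower[OF that(1)] J_upper[OF that(2)] by simp
    then have "k < Suc n" using power_strict_decreasing_iff[OF r_props(1,2), of "Suc n" k] by simp
    then show ?thesis by simp
  qed
  assume "w \<in> J n" "w \<in> J k" then show ?thesis using *[of n k] *[of k n] by simp
qed

lemma J_level: "w \<in> J n \<Longrightarrow> level N rr w = n"
  unfolding level_def by (rule Least_equality) (auto dest: J_disj)

lemma J_finite: "finite (J n)"
proof -
  define qm where "qm = Max (rr ` {..<N})"
  have ne: "rr ` {..<N} \<noteq> {}" using N2 by (auto simp: lessThan_empty_iff)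
  have "qm \<in> rr ` {..<N}" unfolding qm_def by (rule Max_in) (use ne in auto)
  then have qm: "0 < qm" "qm < 1" using rrA by auto
  have qmge: "rr i \<le> qm" if "i < N" for i unfolding qm_def using that by (intro Max_ge) auto
  have wq: "set w \<subseteq> {..<N} \<Longrightarrow> wr w \<le> qm ^ length w" for w
  proof (induction w)
    case (Cons i w)
    then have "rr i \<le> qm" "0 < rr i" "wr w \<le> qm ^ length w" "0 < wr w" using qmge rrA wr_pos[of w] by auto
    then show ?case using qm by (simp add: mult_mono)
  qed simp
  obtain L where L: "qm ^ L < r ^ Suc n" using real_arch_pow_inv[of "r ^ Suc n" qm] r_props qm by auto
  have "J n \<subseteq> {xs. set xs \<subseteq> {..<N} \<and> length xs \<le> L}"
  proof
    fix w assume w: "w \<in> J n"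
    have "length w \<le> L"
    proof (rule ccontr)
      assume "\<not> length w \<le> L"
      then have "qm ^ length w \<le> qm ^ L" using qm by (intro power_decreasing) auto
      then show False using J_lower[OF w] wq[OF J_set[OF w]] L by simp
    qed
    then show "w \<in> {xs. set xs \<subseteq> {..<N} \<and> length xs \<le> L}" using J_set[OF w] by simp
  qed
  then show ?thesis using finite_lists_length_le[of "{..<N}" L] finite_subset by auto
qed

lemma X_finite: "finite (X n)" unfolding Xn_def using J_finite by auto

lemma J_sub_X: "k \<le> n \<Longrightarrow> J k \<subseteq> X n" unfolding Xn_def by auto

lemma X_mono: "m \<le> n \<Longrightarrow> X m \<subseteq> X n" unfolding Xn_def by force

lemma J_notin_X: "w \<in> J (Suc m) \<Longrightarrow> w \<notin> X m"
  unfolding Xn_def using J_disj by fastforce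

lemma cond_nonneg: "0 \<le> cond N rr S K \<alpha> \<gamma> lam x y"
  unfolding cond_def using lam0 by (auto intro!: divide_nonneg_pos)

lemma csym_sym: "csym x y = csym y x" unfolding csym_def by simp
lemma csym_nonneg: "0 \<le> csym x y" unfolding csym_def using cond_nonneg[of x y] cond_nonneg[of y x] by simp

lemma net_X: "net (X n) csym"
  by unfold_locales (auto simp: X_finite csym_sym csym_nonneg)

lemma energy_En: "energy N rr S K \<alpha> \<gamma> lam n f = En (X n) csym f"
proof -
  let ?c = "cond N rr S K \<alpha> \<gamma> lam"
  have sw: "(\<Sum>x\<in>X n. \<Sum>y\<in>X n. ?c y x * (f x - f y)^2) = (\<Sum>x\<in>X n. \<Sum>y\<in>X n. ?c x y * (f x - f y)^2)"
    by (subst sum.swap) (simp add: power2_commute)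
  have "(\<Sum>x\<in>X n. \<Sum>y\<in>X n. csym x y * (f x - f y)^2) =
      ((\<Sum>x\<in>X n. \<Sum>y\<in>X n. ?c x y * (f x - f y)^2) + (\<Sum>x\<in>X n. \<Sum>y\<in>X n. ?c y x * (f x - f y)^2)) / 2"
    unfolding csym_def by (simp add: sum.distrib[symmetric] sum_divide_distrib[symmetric] algebra_simps)
  then show ?thesis unfolding energy_def En_def sw by simp
qed

lemma cond_vert:
  assumes x: "x \<in> J k" and u: "u \<in> J (Suc k)" and p: "prefix x u"
  shows "cond N rr S K \<alpha> \<gamma> lam u x = wr u powr \<alpha> / lam ^ Suc k"
proof -
  have "vert_edge N rr u x" unfolding vert_edge_def in_tree_def J_level[OF u] using x u p by auto
  then show ?thesis unfolding cond_def J_level[OF u] by simp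
qed

lemma csym_vert:
  assumes x: "x \<in> J k" and u: "u \<in> J (Suc k)" and p: "prefix x u"
  shows "q ^ Suc (Suc k) / (2 * lam ^ Suc k) \<le> csym u x"
proof -
  have "r ^ Suc (Suc k) < wr u" by (rule J_lower[OF u])
  then have "(r ^ Suc (Suc k)) powr \<alpha> \<le> wr u powr \<alpha>"
    using alpha_pos r_props by (intro powr_mono2) auto
  moreover have "(r ^ Suc (Suc k)) powr \<alpha> = q ^ Suc (Suc k)" using r_props by (intro powr_pow_base) simp
  ultimately have "q ^ Suc (Suc k) \<le> wr u powr \<alpha>" by simp
  then have "q ^ Suc (Suc k) / lam ^ Suc k \<le> cond N rr S K \<alpha> \<gamma> lam u x"
    unfolding cond_vert[OF x u p] using lam0 by (simp add: divide_right_mono)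
  then show ?thesis unfolding csym_def using cond_nonneg[of x u] by (simp add: field_simps)
qed

lemma csym_vert_pos:
  assumes x: "x \<in> J k" and u: "u \<in> J (Suc k)" and p: "prefix x u"
  shows "0 < csym u x"
proof -
  have "0 < q ^ Suc (Suc k) / (2 * lam ^ Suc k)" using q_pos lam0 by simp
  then show ?thesis using csym_vert[OF assms] by linarith
qed

lemma cond_horiz:
  assumes x: "x \<in> J m" and y: "y \<in> J m" and ne: "x \<noteq> y"
    and xi: "\<xi> \<in> word_map S x ` K" "\<xi> \<in> word_map S y ` K"
  shows "cond N rr S K \<alpha> \<gamma> lam x y = q ^ m / lam ^ m"
proof -
  have nv: "\<not> vert_edge N rr a b" if a: "a \<in> J m" and b: "b \<in> J m" for a b
  proof
    assume "vert_edge N rr a b"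
    then have "1 \<le> m" "b \<in> J (m - 1)" unfolding vert_edge_def J_level[OF a] by auto
    moreover have "m = m - 1" using J_disj[OF b \<open>b \<in> J (m - 1)\<close>] .
    ultimately show False by simp
  qed
  have nv1: "\<not> vert_edge N rr x y" by (rule nv[OF x y])
  have nv2: "\<not> vert_edge N rr y x" by (rule nv[OF y x])
  define D where "D = {dist (word_map S x a) (word_map S y b) | a b. a \<in> K \<and> b \<in> K}"
  obtain a b where ab: "a \<in> K" "b \<in> K" "\<xi> = word_map S x a" "\<xi> = word_map S y b" using xi by auto
  have "0 \<in> D" unfolding D_def using ab by force
  moreover have "bdd_below D" unfolding D_def by (rule bdd_belowI[of _ 0]) auto
  ultimately have "Inf D \<le> 0" by (rule cInf_lower)
  moreover have "0 \<le> \<gamma> * r ^ m" using gam r_props by simp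
  ultimately have "Inf D \<le> \<gamma> * r ^ m" by linarith
  moreover have "in_tree N rr x" unfolding in_tree_def using x by blast
  ultimately have "horiz_edge N rr S K \<gamma> x y"
    unfolding horiz_edge_def J_level[OF x] D_def[symmetric] using ne y by blast
  then show ?thesis unfolding cond_def J_level[OF x] using nv1 nv2 by simp
qed

lemma csym_horiz:
  assumes x: "x \<in> J m" and y: "y \<in> J m" and ne: "x \<noteq> y"
    and xi: "\<xi> \<in> word_map S x ` K" "\<xi> \<in> word_map S y ` K"
  shows "q ^ m / (2 * lam ^ m) \<le> csym x y"
  unfolding csym_def cond_horiz[OF assms] cond_horiz[OF y x ne[symmetric] xi(2,1)]
  using q_pos lam0 by (simp add: divide_left_mono)

lemma wm_lip: "set w \<subseteq> {..<N} \<Longrightarrow> dist (word_map S w a) (word_map S w b) = wr w * dist a b"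
proof (induction w)
  case (Cons i w)
  then have "similitude (rr i) (S i)" using rrA by auto
  then have "dist (S i (word_map S w a)) (S i (word_map S w b)) = rr i * dist (word_map S w a) (word_map S w b)"
    unfolding similitude_def by blast
  then show ?case using Cons by simp
qed simp

end


lemma (in net) En_zero_term:
  assumes "En V c f = 0" "x \<in> V" "y \<in> V"
  shows "c x y * (f x - f y)^2 = 0"
proof -
  have nn2: "0 \<le> c a b * (f a - f b)^2" for a b by (simp add: nn)
  have nn3: "0 \<le> (\<Sum>y\<in>V. c a y * (f a - f y)^2)" for a by (rule sum_nonneg) (rule nn2)
  have "(\<Sum>x\<in>V. \<Sum>y\<in>V. c x y * (f x - f y)^2) = 0" using assms(1) unfolding En_def by simp
  then have "(\<Sum>y\<in>V. c x y * (f x - f y)^2) = 0"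
    using sum_nonneg_eq_0_iff[OF fin, of "\<lambda>x. \<Sum>y\<in>V. c x y * (f x - f y)^2"] nn3 assms(2) by blast
  then show ?thesis using sum_nonneg_eq_0_iff[OF fin, of "\<lambda>y. c x y * (f x - f y)^2"] nn2 assms(3) by blast
qed

lemma (in net) En_term_le:
  assumes "x \<in> V" "y \<in> V"
  shows "c x y * (f x - f y)^2 \<le> 2 * En V c f"
proof -
  have nn2: "0 \<le> c a b * (f a - f b)^2" for a b by (simp add: nn)
  have "c x y * (f x - f y)^2 \<le> (\<Sum>y\<in>V. c x y * (f x - f y)^2)"
    using assms(2) fin nn2 by (intro member_le_sum) auto
  also have "\<dots> \<le> (\<Sum>x\<in>V. \<Sum>y\<in>V. c x y * (f x - f y)^2)"
    using assms(1) fin nn2 by (intro member_le_sum) (auto intro: sum_nonneg)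
  finally show ?thesis unfolding En_def by simp
qed

lemma En_split:
  assumes "net V' c" and VV: "V \<subseteq> V'" and a: "a \<in> V" and b: "b \<in> V'" "b \<notin> V"
  shows "En V c g + c a b * (g a - g b)^2 \<le> En V' c g"
proof -
  interpret net V' c by fact
  have finV: "finite V" using VV fin finite_subset by auto
  define F where "F p = c (fst p) (snd p) * (g (fst p) - g (snd p))^2" for p
  have Fnn: "0 \<le> F p" for p unfolding F_def by (simp add: nn)
  have sum2: "(\<Sum>x\<in>U. \<Sum>y\<in>U. c x y * (g x - g y)^2) = sum F (U \<times> U)" if "finite U" for U
    unfolding F_def by (simp add: sum.cartesian_product case_prod_beta)
  have sub: "(V \<times> V) \<union> {(a,b), (b,a)} \<subseteq> V' \<times> V'" using VV a b by auto
  have disj: "(V \<times> V) \<inter> {(a,b), (b,a)} = {}" using b by auto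
  have ab: "(a,b) \<noteq> (b,a)" using a b by auto
  have u: "sum F ((V \<times> V) \<union> {(a,b), (b,a)}) = sum F (V \<times> V) + sum F {(a,b), (b,a)}"
    by (rule sum.union_disjoint) (use finV disj in auto)
  have "sum F {(a,b), (b,a)} = F (a,b) + F (b,a)" using ab by simp
  then have "sum F (V \<times> V) + (F (a,b) + F (b,a)) = sum F ((V \<times> V) \<union> {(a,b), (b,a)})"
    using u by simp
  also have "\<dots> \<le> sum F (V' \<times> V')"
    using sub fin Fnn by (intro sum_mono2) auto
  finally have A: "sum F (V \<times> V) + (F (a,b) + F (b,a)) \<le> sum F (V' \<times> V')" .
  have "F (b,a) = F (a,b)" unfolding F_def fst_conv snd_conv sym[of b a]
    by (simp only: power2_commute)
  then have "sum F (V \<times> V) + 2 * F (a,b) \<le> sum F (V' \<times> V')" using A by simp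
  moreover have "En V c g = 1/2 * sum F (V \<times> V)" "En V' c g = 1/2 * sum F (V' \<times> V')"
    unfolding En_def sum2[OF finV] sum2[OF fin] by simp_all
  moreover have "F (a,b) = c a b * (g a - g b)^2" unfolding F_def by simp
  ultimately show ?thesis by simp
qed

lemma alg1:
  fixes C e P W :: real
  assumes C: "0 < C" and e: "0 \<le> e" and P: "0 \<le> P" and W: "0 \<le> W"
    and h: "C - 2 * sqrt (e * W) * C \<le> sqrt (C * P)"
  shows "C \<le> (1 + 4 * e * C) * (P + W)"
proof -
  define s where "s = sqrt C"
  define p where "p = sqrt P"
  define w where "w = sqrt W"
  define k where "k = 2 * sqrt e * s"
  have s: "0 < s" "s^2 = C" using C unfolding s_def by auto
  have p: "0 \<le> p" "p^2 = P" using P unfolding p_def by auto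
  have w: "0 \<le> w" "w^2 = W" using W unfolding w_def by auto
  have k: "0 \<le> k" "k^2 = 4 * e * C" unfolding k_def using s e by (auto simp: power_mult_distrib)
  have e1: "sqrt (e * W) = sqrt e * w" unfolding w_def by (simp add: real_sqrt_mult)
  have e2: "sqrt (C * P) = s * p" unfolding s_def p_def by (simp add: real_sqrt_mult)
  have hC: "C = s * s" using s by (simp add: power2_eq_square)
  have h': "C - 2 * (sqrt e * w) * C \<le> s * p" using h unfolding e1 e2 .
  have "s * s - 2 * (sqrt e * w) * (s * s) \<le> s * p" using h' hC by simp
  then have "s * s - k * w * s \<le> s * p" unfolding k_def by (simp add: algebra_simps)
  then have "s * s \<le> s * (p + k * w)" by (simp add: algebra_simps)
  then have "s \<le> p + k * w" using s(1) by simp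
  then have "s^2 \<le> (p + k * w)^2" using s(1) by (intro power_mono) auto
  also have "\<dots> \<le> (1 + k^2) * (p^2 + w^2)"
  proof -
    have "(1 + k^2) * (p^2 + w^2) - (p + k * w)^2 = (k * p - w)^2" by (simp add: power2_eq_square algebra_simps)
    then show ?thesis by (smt (verit) zero_le_power2)
  qed
  finally have "s^2 \<le> (1 + k^2) * (p^2 + w^2)" .
  then show ?thesis unfolding s(2) p(2) w(2) k(2) .
qed
lemma alg2:
  fixes C k P :: real
  assumes C: "0 < C" and k: "0 \<le> k" and P: "0 \<le> P"
    and h: "C - 2 * (k * sqrt P) * C \<le> sqrt (C * P)"
  shows "(sqrt C / (1 + 2 * k * sqrt C))^2 \<le> P"
proof -
  define s where "s = sqrt C"
  define p where "p = sqrt P"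
  have s: "0 < s" "s^2 = C" using C unfolding s_def by auto
  have p: "0 \<le> p" "p^2 = P" using P unfolding p_def by auto
  have e2: "sqrt (C * P) = s * p" unfolding s_def p_def by (simp add: real_sqrt_mult)
  have hC: "C = s * s" using s by (simp add: power2_eq_square)
  have h': "C - 2 * (k * p) * C \<le> s * p" using h unfolding e2 p_def[symmetric] .
  have "s * s - 2 * (k * p) * (s * s) \<le> s * p" using h' hC by simp
  then have "s * s - 2 * k * p * s * s \<le> s * p" by (simp add: algebra_simps)
  then have "s * s \<le> s * (p * (1 + 2 * k * s))" by (simp add: algebra_simps)
  then have "s \<le> p * (1 + 2 * k * s)" using s(1) by simp
  moreover have "0 < 1 + 2 * k * s" using k s by (simp add: add_pos_nonneg)
  ultimately have "s / (1 + 2 * k * s) \<le> p" by (simp add: divide_le_eq)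
  then have "(s / (1 + 2 * k * s))^2 \<le> p^2" using s k by (intro power_mono) auto
  then show ?thesis using p unfolding s_def by simp
qed

context setting
begin

lemma res_eq:
  "level_res N rr S K \<alpha> \<gamma> lam \<kappa> m \<Phi> \<Psi> =
    (if \<kappa> m ` \<Phi> \<inter> \<kappa> m ` \<Psi> \<noteq> {} then 0 else inverse (cap (X m) csym (\<kappa> m ` \<Phi>) (\<kappa> m ` \<Psi>)))"
  unfolding level_res_def eff_res_def energy_En cap_def adm_def by simp

lemma kJ: "kappa_seq N rr S K \<kappa> \<Longrightarrow> \<xi> \<in> K \<Longrightarrow> \<kappa> n \<xi> \<in> J n"
  unfolding kappa_seq_def by blast
lemma kP: "kappa_seq N rr S K \<kappa> \<Longrightarrow> \<xi> \<in> K \<Longrightarrow> prefix (\<kappa> n \<xi>) (\<kappa> (Suc n) \<xi>)"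
  unfolding kappa_seq_def by blast
lemma kM: "kappa_seq N rr S K \<kappa> \<Longrightarrow> \<xi> \<in> K \<Longrightarrow> \<xi> \<in> word_map S (\<kappa> n \<xi>) ` K"
  unfolding kappa_seq_def by blast

lemma img_sub: "kappa_seq N rr S K \<kappa> \<Longrightarrow> \<Phi> \<subseteq> K \<Longrightarrow> \<kappa> m ` \<Phi> \<subseteq> X m"
  using kJ J_sub_X[of m m] by blast

lemma cap_pos:
  assumes k: "kappa_seq N rr S K \<kappa>" and PK: "\<Phi> \<subseteq> K" "\<Psi> \<subseteq> K" and ne: "\<Phi> \<noteq> {}" "\<Psi> \<noteq> {}"
    and dj: "\<kappa> m ` \<Phi> \<inter> \<kappa> m ` \<Psi> = {}"
  shows "0 < cap (X m) csym (\<kappa> m ` \<Phi>) (\<kappa> m ` \<Psi>)"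
proof -
  interpret net "X m" csym by (rule net_X)
  obtain f where fadm: "adm (\<kappa> m ` \<Phi>) (\<kappa> m ` \<Psi>) f"
    and fmin: "\<forall>g. adm (\<kappa> m ` \<Phi>) (\<kappa> m ` \<Psi>) g \<longrightarrow> En (X m) csym f \<le> En (X m) csym g"
    using exists_min[OF dj] by blast
  have capE: "cap (X m) csym (\<kappa> m ` \<Phi>) (\<kappa> m ` \<Psi>) = En (X m) csym f" by (rule cap_min[OF fadm fmin])
  show ?thesis
  proof (rule ccontr)
    assume "\<not> ?thesis"
    then have E0: "En (X m) csym f = 0" using capE En_nonneg[of f] by simp
    have chain: "\<xi> \<in> K \<Longrightarrow> j \<le> m \<Longrightarrow> f (\<kappa> j \<xi>) = f []" for \<xi> j
    proof (induction j)
      case 0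
      then show ?case using kJ[OF k, of \<xi> 0] J0 by simp
    next
      case (Suc j)
      have x: "\<kappa> j \<xi> \<in> J j" and u: "\<kappa> (Suc j) \<xi> \<in> J (Suc j)" and p: "prefix (\<kappa> j \<xi>) (\<kappa> (Suc j) \<xi>)"
        using kJ[OF k Suc.prems(1)] kP[OF k Suc.prems(1)] by auto
      have inX: "\<kappa> j \<xi> \<in> X m" "\<kappa> (Suc j) \<xi> \<in> X m" using x u J_sub_X[of j m] J_sub_X[of "Suc j" m] Suc.prems(2) by auto
      have "csym (\<kappa> (Suc j) \<xi>) (\<kappa> j \<xi>) * (f (\<kappa> (Suc j) \<xi>) - f (\<kappa> j \<xi>))^2 = 0"
        by (rule En_zero_term[OF E0 inX(2,1)])
      then have "f (\<kappa> (Suc j) \<xi>) = f (\<kappa> j \<xi>)" using csym_vert_pos[OF x u p] by simp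
      then show ?case using Suc by simp
    qed
    obtain a b where a: "a \<in> \<Phi>" and b: "b \<in> \<Psi>" using ne by auto
    have "f (\<kappa> m a) = 1" "f (\<kappa> m b) = 0" using fadm a b unfolding adm_def by auto
    moreover have "f (\<kappa> m a) = f []" "f (\<kappa> m b) = f []" using chain a b PK by auto
    ultimately show False by simp
  qed
qed

lemma sq_abs_le: "a^2 \<le> b \<Longrightarrow> \<bar>a\<bar> \<le> sqrt (b::real)"
  by (metis real_sqrt_abs real_sqrt_le_mono)

lemma adm_ex: "A \<inter> B = {} \<Longrightarrow> {En V c f | f. adm A B f} \<noteq> {}"
proof -
  assume "A \<inter> B = {}"
  then have "adm A B (\<lambda>x. if x \<in> A then 1 else 0)" unfolding adm_def by auto
  then show ?thesis by blast
qed

lemma step1: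
  assumes k: "kappa_seq N rr S K \<kappa>" and PK: "\<Phi> \<subseteq> K" "\<Psi> \<subseteq> K" and ne: "\<Phi> \<noteq> {}" "\<Psi> \<noteq> {}"
    and dj: "\<kappa> m ` \<Phi> \<inter> \<kappa> m ` \<Psi> = {}" and dj': "\<kappa> (Suc m) ` \<Phi> \<inter> \<kappa> (Suc m) ` \<Psi> = {}"
  shows "level_res N rr S K \<alpha> \<gamma> lam \<kappa> (Suc m) \<Phi> \<Psi> \<le>
           level_res N rr S K \<alpha> \<gamma> lam \<kappa> m \<Phi> \<Psi> + 4 * (2 * lam ^ Suc m / q ^ Suc (Suc m))"
proof -
  define e where "e = 2 * lam ^ Suc m / q ^ Suc (Suc m)"
  have e0: "0 < e" unfolding e_def using lam0 q_pos by simp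
  define E where "E = \<kappa> m ` \<Phi>"
  define F where "F = \<kappa> m ` \<Psi>"
  define E' where "E' = \<kappa> (Suc m) ` \<Phi>"
  define F' where "F' = \<kappa> (Suc m) ` \<Psi>"
  interpret n1: net "X m" csym by (rule net_X)
  interpret n2: net "X (Suc m)" csym by (rule net_X)
  define C where "C = cap (X m) csym E F"
  have C0: "0 < C" unfolding C_def E_def F_def by (rule cap_pos[OF k PK ne dj])
  have low: "C / (1 + 4 * e * C) \<le> En (X (Suc m)) csym g" if g: "adm E' F' g" for g
  proof -
    define P where "P = En (X m) csym g"
    define T where "T = En (X (Suc m)) csym g"
    define W where "W = T - P"
    have P0: "0 \<le> P" unfolding P_def by (rule n1.En_nonneg)
    have vb: "(g (\<kappa> m \<xi>) - g (\<kappa> (Suc m) \<xi>))^2 \<le> e * W" if \<xi>: "\<xi> \<in> K" for \<xi>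
    proof -
      let ?x = "\<kappa> m \<xi>" and ?u = "\<kappa> (Suc m) \<xi>"
      have x: "?x \<in> J m" and u: "?u \<in> J (Suc m)" and p: "prefix ?x ?u"
        using kJ[OF k \<xi>] kP[OF k \<xi>] by auto
      have cs: "q ^ Suc (Suc m) / (2 * lam ^ Suc m) \<le> csym ?u ?x" by (rule csym_vert[OF x u p])
      have "1 \<le> e * csym ?u ?x"
      proof -
        have "1 = e * (q ^ Suc (Suc m) / (2 * lam ^ Suc m))" unfolding e_def using lam0 q_pos by simp
        also have "\<dots> \<le> e * csym ?u ?x" using cs e0 by (intro mult_left_mono) auto
        finally show ?thesis .
      qed
      have sp: "P + csym ?x ?u * (g ?x - g ?u)^2 \<le> T"
        unfolding P_def T_def
        by (rule En_split[OF net_X X_mono]) (use x u J_sub_X[of m m] J_sub_X[of "Suc m" "Suc m"] J_notin_X[OF u] in auto)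
      have "(g ?x - g ?u)^2 \<le> (e * csym ?u ?x) * (g ?x - g ?u)^2"
        using \<open>1 \<le> e * csym ?u ?x\<close> by (simp add: mult_le_cancel_right1)
      also have "\<dots> = e * (csym ?x ?u * (g ?x - g ?u)^2)" by (simp add: csym_sym)
      also have "\<dots> \<le> e * W" unfolding W_def using sp e0 by (intro mult_left_mono) auto
      finally show ?thesis .
    qed
    have W0: "0 \<le> W"
    proof -
      obtain a where "a \<in> \<Phi>" using ne by auto
      then have "0 \<le> e * W" using vb[of a] PK by (meson order_trans subsetD zero_le_power2)
      then show ?thesis using e0 by (simp add: zero_le_mult_iff)
    qed
    have gA: "\<forall>x\<in>E. \<bar>g x - 1\<bar> \<le> sqrt (e * W)"
    proof
      fix x assume "x \<in> E"
      then obtain \<xi> where \<xi>: "\<xi> \<in> \<Phi>" "x = \<kappa> m \<xi>" unfolding E_def by auto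
      have "g (\<kappa> (Suc m) \<xi>) = 1" using g \<xi> unfolding adm_def E'_def by auto
      then show "\<bar>g x - 1\<bar> \<le> sqrt (e * W)" using vb[of \<xi>] \<xi> PK by (intro sq_abs_le) auto
    qed
    have gB: "\<forall>x\<in>F. \<bar>g x\<bar> \<le> sqrt (e * W)"
    proof
      fix x assume "x \<in> F"
      then obtain \<xi> where \<xi>: "\<xi> \<in> \<Psi>" "x = \<kappa> m \<xi>" unfolding F_def by auto
      have "g (\<kappa> (Suc m) \<xi>) = 0" using g \<xi> unfolding adm_def F'_def by auto
      then show "\<bar>g x\<bar> \<le> sqrt (e * W)" using vb[of \<xi>] \<xi> PK by (intro sq_abs_le) auto
    qed
    have "C - 2 * sqrt (e * W) * C \<le> sqrt (C * P)"
      unfolding C_def P_def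
      by (rule n1.key) (use img_sub[OF k PK(1)] img_sub[OF k PK(2)] dj C0 gA gB e0 W0 in
          \<open>auto simp: E_def F_def C_def\<close>)
    then have "C \<le> (1 + 4 * e * C) * (P + W)" by (rule alg1[OF C0 less_imp_le[OF e0] P0 W0])
    then have "C \<le> (1 + 4 * e * C) * T" unfolding W_def by simp
    moreover have "0 < 1 + 4 * e * C" using C0 e0 by (simp add: add_pos_pos)
    ultimately show ?thesis unfolding T_def by (simp add: divide_le_eq mult.commute)
  qed
  define C' where "C' = cap (X (Suc m)) csym E' F'"
  have C'ge: "C / (1 + 4 * e * C) \<le> C'"
    unfolding C'_def cap_def
    by (rule cInf_greatest) (use adm_ex[of E' F'] dj' low in \<open>auto simp: E'_def F'_def\<close>)
  have pos: "0 < C / (1 + 4 * e * C)" using C0 e0 by (simp add: add_pos_pos)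
  have "level_res N rr S K \<alpha> \<gamma> lam \<kappa> (Suc m) \<Phi> \<Psi> = inverse C'"
    unfolding res_eq C'_def E'_def F'_def using dj' by simp
  also have "\<dots> \<le> inverse (C / (1 + 4 * e * C))" using C'ge pos by (intro le_imp_inverse_le) auto
  also have "\<dots> = inverse C + 4 * e" using C0 e0 by (simp add: field_simps)
  also have "inverse C = level_res N rr S K \<alpha> \<gamma> lam \<kappa> m \<Phi> \<Psi>"
    unfolding res_eq C_def E_def F_def using dj by simp
  finally show ?thesis unfolding e_def .
qed

lemma step2:
  assumes k: "kappa_seq N rr S K \<kappa>" and k': "kappa_seq N rr S K \<kappa>'"
    and PK: "\<Phi> \<subseteq> K" "\<Psi> \<subseteq> K" and ne: "\<Phi> \<noteq> {}" "\<Psi> \<noteq> {}"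
    and dj: "\<kappa> m ` \<Phi> \<inter> \<kappa> m ` \<Psi> = {}" and dj': "\<kappa>' m ` \<Phi> \<inter> \<kappa>' m ` \<Psi> = {}"
  shows "sqrt (level_res N rr S K \<alpha> \<gamma> lam \<kappa>' m \<Phi> \<Psi>) \<le>
           sqrt (level_res N rr S K \<alpha> \<gamma> lam \<kappa> m \<Phi> \<Psi>) + 2 * sqrt (2 * (2 * lam ^ m / q ^ m))"
proof -
  define e where "e = 2 * lam ^ m / q ^ m"
  have e0: "0 < e" unfolding e_def using lam0 q_pos by simp
  define kk where "kk = sqrt (2 * e)"
  have kk0: "0 \<le> kk" unfolding kk_def using e0 by simp
  define E where "E = \<kappa> m ` \<Phi>"
  define F where "F = \<kappa> m ` \<Psi>"
  define E' where "E' = \<kappa>' m ` \<Phi>"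
  define F' where "F' = \<kappa>' m ` \<Psi>"
  interpret n1: net "X m" csym by (rule net_X)
  define C where "C = cap (X m) csym E F"
  have C0: "0 < C" unfolding C_def E_def F_def by (rule cap_pos[OF k PK ne dj])
  define b where "b = sqrt C / (1 + 2 * kk * sqrt C)"
  have low: "b^2 \<le> En (X m) csym g" if g: "adm E' F' g" for g
  proof -
    define P where "P = En (X m) csym g"
    have P0: "0 \<le> P" unfolding P_def by (rule n1.En_nonneg)
    have vb: "(g (\<kappa> m \<xi>) - g (\<kappa>' m \<xi>))^2 \<le> (kk * sqrt P)^2" if \<xi>: "\<xi> \<in> K" for \<xi>
    proof -
      let ?x = "\<kappa> m \<xi>" and ?y = "\<kappa>' m \<xi>"
      have rhs: "(kk * sqrt P)^2 = e * (2 * P)" unfolding kk_def using e0 P0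
        by (simp add: power_mult_distrib)
      show ?thesis
      proof (cases "?x = ?y")
        case True
        then show ?thesis by simp
      next
        case False
        have x: "?x \<in> J m" and y: "?y \<in> J m" using kJ[OF k \<xi>] kJ[OF k' \<xi>] by auto
        have cs: "q ^ m / (2 * lam ^ m) \<le> csym ?x ?y"
          by (rule csym_horiz[OF x y False kM[OF k \<xi>] kM[OF k' \<xi>]])
        have "1 \<le> e * csym ?x ?y"
        proof -
          have "1 = e * (q ^ m / (2 * lam ^ m))" unfolding e_def using lam0 q_pos by simp
          also have "\<dots> \<le> e * csym ?x ?y" using cs e0 by (intro mult_left_mono) auto
          finally show ?thesis .
        qed
        have tl: "csym ?x ?y * (g ?x - g ?y)^2 \<le> 2 * P"
          unfolding P_def by (rule n1.En_term_le) (use x y J_sub_X[of m m] in auto)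
        have "(g ?x - g ?y)^2 \<le> (e * csym ?x ?y) * (g ?x - g ?y)^2"
          using \<open>1 \<le> e * csym ?x ?y\<close> by (simp add: mult_le_cancel_right1)
        also have "\<dots> = e * (csym ?x ?y * (g ?x - g ?y)^2)" by simp
        also have "\<dots> \<le> e * (2 * P)" using tl e0 by (intro mult_left_mono) auto
        finally show ?thesis using rhs by simp
      qed
    qed
    have kp0: "0 \<le> kk * sqrt P" using kk0 P0 by simp
    have gA: "\<forall>x\<in>E. \<bar>g x - 1\<bar> \<le> kk * sqrt P"
    proof
      fix x assume "x \<in> E"
      then obtain \<xi> where \<xi>: "\<xi> \<in> \<Phi>" "x = \<kappa> m \<xi>" unfolding E_def by auto
      have "g (\<kappa>' m \<xi>) = 1" using g \<xi> unfolding adm_def E'_def by auto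
      then have "(g x - 1)^2 \<le> (kk * sqrt P)^2" using vb[of \<xi>] \<xi> PK by auto
      then show "\<bar>g x - 1\<bar> \<le> kk * sqrt P" using kp0 by (metis abs_le_square_iff abs_of_nonneg)
    qed
    have gB: "\<forall>x\<in>F. \<bar>g x\<bar> \<le> kk * sqrt P"
    proof
      fix x assume "x \<in> F"
      then obtain \<xi> where \<xi>: "\<xi> \<in> \<Psi>" "x = \<kappa> m \<xi>" unfolding F_def by auto
      have "g (\<kappa>' m \<xi>) = 0" using g \<xi> unfolding adm_def F'_def by auto
      then have "(g x)^2 \<le> (kk * sqrt P)^2" using vb[of \<xi>] \<xi> PK by auto
      then show "\<bar>g x\<bar> \<le> kk * sqrt P" using kp0 by (metis abs_le_square_iff abs_of_nonneg)
    qed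
    have "C - 2 * (kk * sqrt P) * C \<le> sqrt (C * P)"
      unfolding C_def P_def
      by (rule n1.key) (use img_sub[OF k PK(1)] img_sub[OF k PK(2)] dj C0 gA gB kp0 in
          \<open>auto simp: E_def F_def C_def P_def\<close>)
    then have "(sqrt C / (1 + 2 * kk * sqrt C))^2 \<le> P" by (rule alg2[OF C0 kk0 P0])
    then show ?thesis unfolding b_def P_def .
  qed
  define C' where "C' = cap (X m) csym E' F'"
  have C'ge: "b^2 \<le> C'"
    unfolding C'_def cap_def
    by (rule cInf_greatest) (use adm_ex[of E' F'] dj' low in \<open>auto simp: E'_def F'_def\<close>)
  have den: "0 < 1 + 2 * kk * sqrt C" using kk0 C0 by (simp add: add_pos_nonneg)
  have bpos: "0 < b" unfolding b_def using C0 den by simp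
  have "level_res N rr S K \<alpha> \<gamma> lam \<kappa>' m \<Phi> \<Psi> = inverse C'"
    unfolding res_eq C'_def E'_def F'_def using dj' by simp
  also have "\<dots> \<le> inverse (b^2)" using C'ge bpos by (intro le_imp_inverse_le) auto
  finally have "sqrt (level_res N rr S K \<alpha> \<gamma> lam \<kappa>' m \<Phi> \<Psi>) \<le> sqrt (inverse (b^2))"
    by (rule real_sqrt_le_mono)
  also have "sqrt (inverse (b^2)) = inverse b" using bpos by (simp add: real_sqrt_inverse)
  also have "inverse b = inverse (sqrt C) + 2 * kk" unfolding b_def using C0 den by (simp add: field_simps)
  also have "inverse (sqrt C) = sqrt (level_res N rr S K \<alpha> \<gamma> lam \<kappa> m \<Phi> \<Psi>)"
    unfolding res_eq C_def E_def F_def using dj by (simp add: real_sqrt_inverse)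
  finally show ?thesis unfolding kk_def e_def .
qed

end


lemma conv_lemma:
  fixes f e :: "nat \<Rightarrow> real"
  assumes st: "\<forall>m\<ge>m0. f (Suc m) \<le> f m + e m" and nn: "\<forall>m\<ge>m0. 0 \<le> f m"
    and se: "summable e" and e0: "\<forall>m. 0 \<le> e m"
  shows "convergent f"
proof -
  define e' where "e' k = e (k + m0)" for k
  have se': "summable e'" unfolding e'_def by (rule summable_ignore_initial_segment[OF se])
  define T where "T n = f (n + m0) - (\<Sum>k<n. e' k)" for n
  have dec: "antimono_on UNIV T"
  proof (rule decseq_SucI)
    fix n
    have "f (Suc (n + m0)) \<le> f (n + m0) + e' n" using st unfolding e'_def by (simp add: add.commute)
    then show "T (Suc n) \<le> T n" unfolding T_def by simp
  qed
  have bd: "\<forall>i. - suminf e' \<le> T i"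
  proof
    fix i
    have "(\<Sum>k<i. e' k) \<le> suminf e'" using se' e0 unfolding e'_def by (intro sum_le_suminf) auto
    moreover have "0 \<le> f (i + m0)" using nn by simp
    ultimately show "- suminf e' \<le> T i" unfolding T_def by simp
  qed
  obtain L where L: "T \<longlonglongrightarrow> L" using decseq_convergent[OF dec bd] by blast
  have "(\<lambda>n. T n + (\<Sum>k<n. e' k)) \<longlonglongrightarrow> L + suminf e'"
    by (intro tendsto_add L summable_LIMSEQ[OF se'])
  then have "(\<lambda>n. f (n + m0)) \<longlonglongrightarrow> L + suminf e'" unfolding T_def by simp
  then have "f \<longlonglongrightarrow> L + suminf e'" by (rule LIMSEQ_offset)
  then show ?thesis unfolding convergent_def by blast
qed

context setting
begin

lemma eventually_disj:
  assumes cK: "compact K" and cP: "closed \<Phi>" "closed \<Psi>" and PK: "\<Phi> \<subseteq> K" "\<Psi> \<subseteq> K"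
    and dj: "\<Phi> \<inter> \<Psi> = {}"
  shows "\<exists>m0. \<forall>m\<ge>m0. \<forall>\<kappa>. kappa_seq N rr S K \<kappa> \<longrightarrow> \<kappa> m ` \<Phi> \<inter> \<kappa> m ` \<Psi> = {}"
proof -
  have "compact (K \<inter> \<Phi>)" by (rule compact_Int_closed[OF cK cP(1)])
  moreover have "K \<inter> \<Phi> = \<Phi>" using PK by auto
  ultimately have cP1: "compact \<Phi>" by simp
  obtain \<delta> where \<delta>: "0 < \<delta>" "\<forall>x\<in>\<Phi>. \<forall>y\<in>\<Psi>. \<delta> \<le> dist x y"
    using separate_compact_closed[OF cP1 cP(2) dj] by blast
  define D where "D = diameter K"
  have bK: "bounded K" by (rule compact_imp_bounded[OF cK])
  have Dle: "dist a b \<le> D" if "a \<in> K" "b \<in> K" for a b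
    unfolding D_def by (rule diameter_bounded_bound[OF bK that])
  have D0: "0 \<le> D" unfolding D_def by (rule diameter_ge_0[OF bK])
  obtain m0 where m0: "r ^ m0 < \<delta> / (D + 1)"
    using real_arch_pow_inv[of "\<delta> / (D + 1)" r] \<delta> D0 r_props by auto
  have "\<forall>m\<ge>m0. \<forall>\<kappa>. kappa_seq N rr S K \<kappa> \<longrightarrow> \<kappa> m ` \<Phi> \<inter> \<kappa> m ` \<Psi> = {}"
  proof (intro allI impI)
    fix m \<kappa> assume m: "m0 \<le> m" and k: "kappa_seq N rr S K \<kappa>"
    show "\<kappa> m ` \<Phi> \<inter> \<kappa> m ` \<Psi> = {}"
    proof (rule ccontr)
      assume "\<kappa> m ` \<Phi> \<inter> \<kappa> m ` \<Psi> \<noteq> {}"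
      then obtain a b where a: "a \<in> \<Phi>" and b: "b \<in> \<Psi>" and eq: "\<kappa> m a = \<kappa> m b" by blast
      define x where "x = \<kappa> m a"
      have aK: "a \<in> K" and bK': "b \<in> K" using a b PK by auto
      have xJ: "x \<in> J m" unfolding x_def by (rule kJ[OF k aK])
      obtain a' where a': "a' \<in> K" "a = word_map S x a'" using kM[OF k aK] unfolding x_def by auto
      obtain b' where b': "b' \<in> K" "b = word_map S x b'" using kM[OF k bK'] unfolding x_def eq by auto
      have "dist a b = wr x * dist a' b'" unfolding a'(2) b'(2) by (rule wm_lip[OF J_set[OF xJ]])
      also have "\<dots> \<le> r ^ m * D"
        using J_upper[OF xJ] Dle[OF a'(1) b'(1)] wr_pos[OF J_set[OF xJ]] D0
        by (intro mult_mono) auto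
      also have "\<dots> \<le> r ^ m0 * D" using r_props m D0 by (intro mult_right_mono power_decreasing) auto
      also have "\<dots> \<le> \<delta> / (D + 1) * D" using m0 D0 by (intro mult_right_mono) auto
      also have "\<dots> < \<delta>"
      proof -
        have "\<delta> / (D + 1) * D = \<delta> * (D / (D + 1))" by simp
        also have "\<dots> < \<delta> * 1" using \<delta>(1) D0 by (intro mult_strict_left_mono) auto
        finally show ?thesis by simp
      qed
      finally have "dist a b < \<delta>" .
      then show False using \<delta>(2) a b by force
    qed
  qed
  then show ?thesis by blast
qed

lemma res_nonneg_dj:
  assumes k: "kappa_seq N rr S K \<kappa>" and PK: "\<Phi> \<subseteq> K" "\<Psi> \<subseteq> K" and ne: "\<Phi> \<noteq> {}" "\<Psi> \<noteq> {}"
    and dj: "\<kappa> m ` \<Phi> \<inter> \<kappa> m ` \<Psi> = {}"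
  shows "0 \<le> level_res N rr S K \<alpha> \<gamma> lam \<kappa> m \<Phi> \<Psi>"
  unfolding res_eq using dj cap_pos[OF k PK ne dj] by simp

theorem main:
  assumes cK: "compact K" and cP: "closed \<Phi>" "closed \<Psi>" and PK: "\<Phi> \<subseteq> K" "\<Psi> \<subseteq> K"
    and ne: "\<Phi> \<noteq> {}" "\<Psi> \<noteq> {}"
  shows "\<exists>L. \<forall>\<kappa>. kappa_seq N rr S K \<kappa> \<longrightarrow>
           (\<lambda>n. level_res N rr S K \<alpha> \<gamma> lam \<kappa> n \<Phi> \<Psi>) \<longlonglongrightarrow> L"
proof (cases "\<Phi> \<inter> \<Psi> = {}")
  case False
  then obtain z where z: "z \<in> \<Phi>" "z \<in> \<Psi>" by blast
  have "(\<lambda>n. level_res N rr S K \<alpha> \<gamma> lam \<kappa> n \<Phi> \<Psi>) \<longlonglongrightarrow> 0" if k: "kappa_seq N rr S K \<kappa>" for \<kappa>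
  proof -
    have "level_res N rr S K \<alpha> \<gamma> lam \<kappa> n \<Phi> \<Psi> = 0" for n
    proof -
      have "\<kappa> n z \<in> \<kappa> n ` \<Phi> \<inter> \<kappa> n ` \<Psi>" using z by auto
      then show ?thesis unfolding res_eq by auto
    qed
    then show ?thesis by simp
  qed
  then show ?thesis by blast
next
  case True
  obtain m0 where m0: "\<forall>m\<ge>m0. \<forall>\<kappa>. kappa_seq N rr S K \<kappa> \<longrightarrow> \<kappa> m ` \<Phi> \<inter> \<kappa> m ` \<Psi> = {}"
    using eventually_disj[OF cK cP PK True] by blast
  let ?R = "\<lambda>\<kappa> n. level_res N rr S K \<alpha> \<gamma> lam \<kappa> n \<Phi> \<Psi>"
  define e where "e m = 4 * (2 * lam ^ Suc m / q ^ Suc (Suc m))" for m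
  have lq: "\<bar>lam / q\<bar> < 1" using lam0 lam1 q_pos by simp
  have e_eq: "e = (\<lambda>m. (8 * lam / q^2) * (lam / q) ^ m)"
    unfolding e_def using q_pos by (auto simp: power_divide field_simps power2_eq_square)
  have se: "summable e" unfolding e_eq by (intro summable_mult summable_geometric) (use lq in simp)
  have e0: "\<forall>m. 0 \<le> e m" unfolding e_def using lam0 q_pos by simp
  have conv: "convergent (?R \<kappa>)" if k: "kappa_seq N rr S K \<kappa>" for \<kappa>
  proof (rule conv_lemma[OF _ _ se e0])
    show "\<forall>m\<ge>m0. ?R \<kappa> (Suc m) \<le> ?R \<kappa> m + e m"
      unfolding e_def using step1[OF k PK ne] m0 k by simp
    show "\<forall>m\<ge>m0. 0 \<le> ?R \<kappa> m" using res_nonneg_dj[OF k PK ne] m0 k by simp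
  qed
  have le: "sqrt (lim (?R \<kappa>')) \<le> sqrt (lim (?R \<kappa>))"
    if k: "kappa_seq N rr S K \<kappa>" and k': "kappa_seq N rr S K \<kappa>'" for \<kappa> \<kappa>'
  proof (rule LIMSEQ_le)
    show "(\<lambda>n. sqrt (?R \<kappa>' n)) \<longlonglongrightarrow> sqrt (lim (?R \<kappa>'))"
      by (intro tendsto_real_sqrt) (use conv[OF k'] in \<open>simp add: convergent_LIMSEQ_iff\<close>)
    have "(\<lambda>n. 2 * lam ^ n / q ^ n) = (\<lambda>n. 2 * (lam / q) ^ n)" by (simp add: power_divide)
    moreover have "(\<lambda>n. 2 * (lam / q) ^ n) \<longlonglongrightarrow> 2 * 0"
      by (intro tendsto_mult tendsto_const LIMSEQ_power_zero) (use lq in simp)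
    ultimately have z: "(\<lambda>n. 2 * lam ^ n / q ^ n) \<longlonglongrightarrow> 0" by simp
    have "(\<lambda>n. sqrt (?R \<kappa> n) + 2 * sqrt (2 * (2 * lam ^ n / q ^ n))) \<longlonglongrightarrow>
        sqrt (lim (?R \<kappa>)) + 2 * sqrt (2 * 0)"
      by (intro tendsto_add tendsto_mult tendsto_const tendsto_real_sqrt z)
        (use conv[OF k] in \<open>simp add: convergent_LIMSEQ_iff\<close>)
    then show "(\<lambda>n. sqrt (?R \<kappa> n) + 2 * sqrt (2 * (2 * lam ^ n / q ^ n))) \<longlonglongrightarrow> sqrt (lim (?R \<kappa>))"
      by simp
    show "\<exists>N. \<forall>n\<ge>N. sqrt (?R \<kappa>' n) \<le> sqrt (?R \<kappa> n) + 2 * sqrt (2 * (2 * lam ^ n / q ^ n))"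
      using step2[OF k k' PK ne] m0 k k' by blast
  qed
  show ?thesis
  proof (cases "\<exists>\<kappa>0. kappa_seq N rr S K \<kappa>0")
    case True
    then obtain \<kappa>0 where k0: "kappa_seq N rr S K \<kappa>0" by blast
    have "?R \<kappa> \<longlonglongrightarrow> lim (?R \<kappa>0)" if k: "kappa_seq N rr S K \<kappa>" for \<kappa>
    proof -
      have "sqrt (lim (?R \<kappa>)) = sqrt (lim (?R \<kappa>0))" using le[OF k k0] le[OF k0 k] by simp
      then have "lim (?R \<kappa>) = lim (?R \<kappa>0)" by simp
      then show ?thesis using conv[OF k] by (simp add: convergent_LIMSEQ_iff)
    qed
    then show ?thesis by blast
  next
    case False
    then show ?thesis by blast
  qed
qed

end

theorem theorem4p1:
  fixes N :: nat and S :: "nat \<Rightarrow> 'a::euclidean_space \<Rightarrow> 'a" and rr :: "nat \<Rightarrow> real"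
    and K :: "'a set" and \<alpha> \<gamma> lam :: real and \<Phi> \<Psi> :: "'a set"
  assumes "N \<ge> 2"
    and "\<forall>i<N. 0 < rr i \<and> rr i < 1 \<and> similitude (rr i) (S i)"
    and "open_set_condition N S"
    and "compact K" and "K \<noteq> {}" and "K = (\<Union>i<N. S i ` K)"
    and "(\<Sum>i<N. rr i powr \<alpha>) = 1"
    and "\<gamma> > 0"
    and "0 < lam" and "lam < rmin N rr powr \<alpha>"
    and "closed \<Phi>" and "\<Phi> \<subseteq> K" and "\<Phi> \<noteq> {}"
    and "closed \<Psi>" and "\<Psi> \<subseteq> K" and "\<Psi> \<noteq> {}"
  shows "\<exists>L. \<forall>\<kappa>. kappa_seq N rr S K \<kappa> \<longrightarrow>
           (\<lambda>n. level_res N rr S K \<alpha> \<gamma> lam \<kappa> n \<Phi> \<Psi>) \<longlonglongrightarrow> L"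
proof -
  interpret setting N rr S K \<alpha> \<gamma> lam
    by unfold_locales (use assms in auto)
  show ?thesis by (rule main) (use assms in auto)
qed

end
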